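(* Let $t \in [n]$. The set of prime ideals of $R$ minimal over $\mathcal{I}^{\langle t\rangle}$ equals the set of ideals of the form $P^{\langle t\rangle}_S$ as $S$ varies over the maximal $t$-switchable subsets of $N$.
   Context: Fix positive integers $n, r_1,\dots,r_n$, let $N=[r_1]\times\cdots\times[r_n]$ (where $[r]=\{1,\dots,r\}$), and let $R$ be the polynomial ring over a field in the variables $x_a$, $a\in N$. For $L\subseteq[n]$ and $a,b\in N$, the switch ${\rm s}(L,a,b)\in N$ has $i$-th component $b_i$ if $i\in L$ and $a_i$ otherwise; write ${\rm s}(i,a,b)={\rm s}(\{i\},a,b)$. Let $d(a,b)=\#\{i: a_i\neq b_i\}$. Set $f_{i,a,b}=x_ax_b-x_{{\rm s}(i,a,b)}x_{{\rm s}(i,b,a)}$. For $t\in[n]$, $\mathcal{I}^{\langle t\rangle}=(f_{i,a,b}: a,b\in N,\ d(a,b)=2,\ i\in[t])$. A subset $S\subseteq N$ is $t$-switchable if for all $a,b\in S$ with $d(a,b)=2$ and all $i\in[t]$, ${\rm s}(i,a,b)\in S$. Elements $a,b\in S$ are connected in $S$ if there are $a_0=a,a_1,\dots,a_k=b$ in $S$ with $d(a_{j-1},a_j)\le 1$ for all $j$. For a $t$-switchable $S$, set $\tilde{\mathcal{I}}^{\langle t\rangle}_S=(f_{i,a,b}: i\in[t],\ a,b \text{ connected in } S)$, $\mathrm{Var}^{\langle t\rangle}_S=(x_a: a\notin S)$, and $P^{\langle t\rangle}_S=\mathrm{Var}^{\langle t\rangle}_S+\tilde{\mathcal{I}}^{\langle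 t\rangle}_S$. A $t$-switchable $S$ is maximal $t$-switchable if for every $t$-switchable $T\subseteq N$ properly containing $S$, the ideals $P^{\langle t\rangle}_S$ and $P^{\langle t\rangle}_T$ are incomparable under inclusion. *)

theory Defs
  imports "HOL-Library.Poly_Mapping"
begin

text \<open>Polynomials over a field 'k in variables indexed by nat \<Rightarrow> nat (tuples).
  The ring R is the subring of polynomials only involving variables x_a with a in N.\<close>

type_synonym 'k mpoly = "((nat \<Rightarrow> nat) \<Rightarrow>\<^sub>0 nat) \<Rightarrow>\<^sub>0 'k"

definition Nset :: "nat \<Rightarrow> (nat \<Rightarrow> nat) \<Rightarrow> (nat \<Rightarrow> nat) set" where
  "Nset n r = {a. \<forall>i. (i \<in> {1..n} \<longrightarrow> a i \<in> {1..r i}) \<and> (i \<notin> {1..n} \<longrightarrow> a i = 0)}"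

definition Rcar :: "(nat \<Rightarrow> nat) set \<Rightarrow> 'k::field mpoly set" where
  "Rcar N = {p :: 'k mpoly. \<forall>m \<in> Poly_Mapping.keys p. Poly_Mapping.keys m \<subseteq> N}"

definition Xv :: "(nat \<Rightarrow> nat) \<Rightarrow> 'k::field mpoly" where
  "Xv a = Poly_Mapping.single (Poly_Mapping.single a 1) 1"

definition switch :: "nat set \<Rightarrow> (nat \<Rightarrow> nat) \<Rightarrow> (nat \<Rightarrow> nat) \<Rightarrow> (nat \<Rightarrow> nat)" where
  "switch L a b = (\<lambda>i. if i \<in> L then b i else a i)"

definition dst :: "nat \<Rightarrow> (nat \<Rightarrow> nat) \<Rightarrow> (nat \<Rightarrow> nat) \<Rightarrow> nat" where
  "dst n a b = card {i \<in> {1..n}. a i \<noteq> b i}"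

definition fpol :: "nat \<Rightarrow> (nat \<Rightarrow> nat) \<Rightarrow> (nat \<Rightarrow> nat) \<Rightarrow> 'k::field mpoly" where
  "fpol i a b = Xv a * Xv b - Xv (switch {i} a b) * Xv (switch {i} b a)"

definition gen_ideal :: "'a::comm_ring_1 set \<Rightarrow> 'a set \<Rightarrow> 'a set" where
  "gen_ideal A G = {\<Sum>g\<in>F. c g * g | F c. finite F \<and> F \<subseteq> G \<and> (\<forall>g\<in>F. c g \<in> A)}"

definition is_ideal :: "'a::comm_ring_1 set \<Rightarrow> 'a set \<Rightarrow> bool" where
  "is_ideal A I \<longleftrightarrow> I \<subseteq> A \<and> 0 \<in> I \<and> (\<forall>x\<in>I. \<forall>y\<in>I. x + y \<in> I)
     \<and> (\<forall>a\<in>A. \<forall>x\<in>I. a * x \<in> I)"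

definition prime_ideal :: "'a::comm_ring_1 set \<Rightarrow> 'a set \<Rightarrow> bool" where
  "prime_ideal A P \<longleftrightarrow> is_ideal A P \<and> P \<noteq> A \<and>
     (\<forall>a\<in>A. \<forall>b\<in>A. a * b \<in> P \<longrightarrow> a \<in> P \<or> b \<in> P)"

definition minimal_prime_over :: "'a::comm_ring_1 set \<Rightarrow> 'a set \<Rightarrow> 'a set \<Rightarrow> bool" where
  "minimal_prime_over A J P \<longleftrightarrow> prime_ideal A P \<and> J \<subseteq> P \<and>
     (\<forall>Q. prime_ideal A Q \<and> J \<subseteq> Q \<and> Q \<subseteq> P \<longrightarrow> Q = P)"

definition I_t :: "nat \<Rightarrow> (nat \<Rightarrow> nat) \<Rightarrow> nat \<Rightarrow> 'k::field mpoly set" where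
  "I_t n r t = gen_ideal (Rcar (Nset n r))
     {fpol i a b | i a b. a \<in> Nset n r \<and> b \<in> Nset n r \<and> dst n a b = 2 \<and> i \<in> {1..t}}"

definition switchable :: "nat \<Rightarrow> (nat \<Rightarrow> nat) \<Rightarrow> nat \<Rightarrow> (nat \<Rightarrow> nat) set \<Rightarrow> bool" where
  "switchable n r t S \<longleftrightarrow> S \<subseteq> Nset n r \<and>
     (\<forall>a\<in>S. \<forall>b\<in>S. dst n a b = 2 \<longrightarrow> (\<forall>i\<in>{1..t}. switch {i} a b \<in> S))"

definition connected_in :: "nat \<Rightarrow> (nat \<Rightarrow> nat) set \<Rightarrow> (nat \<Rightarrow> nat) \<Rightarrow> (nat \<Rightarrow> nat) \<Rightarrow> bool" where
  "connected_in n S a b \<longleftrightarrow> a \<in> S \<and> b \<in> S \<and>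
     (\<lambda>x y. x \<in> S \<and> y \<in> S \<and> dst n x y \<le> 1)\<^sup>*\<^sup>* a b"

definition P_S :: "nat \<Rightarrow> (nat \<Rightarrow> nat) \<Rightarrow> nat \<Rightarrow> (nat \<Rightarrow> nat) set \<Rightarrow> 'k::field mpoly set" where
  "P_S n r t S = gen_ideal (Rcar (Nset n r))
     ({Xv a | a. a \<in> Nset n r \<and> a \<notin> S} \<union>
      {fpol i a b | i a b. i \<in> {1..t} \<and> connected_in n S a b})"

definition maximal_switchable :: "'k::field itself \<Rightarrow> nat \<Rightarrow> (nat \<Rightarrow> nat) \<Rightarrow> nat \<Rightarrow> (nat \<Rightarrow> nat) set \<Rightarrow> bool" where
  "maximal_switchable _ n r t S \<longleftrightarrow> switchable n r t S \<and>
     (\<forall>T. switchable n r t T \<and> S \<subset> T \<longrightarrow>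
        \<not> ((P_S n r t S :: 'k mpoly set) \<subseteq> P_S n r t T) \<and> \<not> ((P_S n r t T :: 'k mpoly set) \<subseteq> P_S n r t S))"

end

theory Submission
  imports Defs "HOL-Library.List_Lexorder" "HOL-Library.Product_Lexorder"
begin


lemma poly_expand: "(p :: ('a \<Rightarrow>\<^sub>0 'b::comm_monoid_add)) = (\<Sum>m\<in>Poly_Mapping.keys p. Poly_Mapping.single m (poly_mapping.lookup p m))"
  by (rule poly_mapping_eqI) (simp add: lookup_sum lookup_single when_def sum.delta in_keys_iff del: lookup_not_eq_zero_eq_in_keys)

lemma keys_uminus: "Poly_Mapping.keys (- (p::'a \<Rightarrow>\<^sub>0 'b::ab_group_add)) = Poly_Mapping.keys p"
  by (rule set_eqI) (simp only: in_keys_iff lookup_uminus neg_equal_0_iff_equal)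

context fixes N :: "(nat \<Rightarrow> nat) set" begin

lemma Rcar_add: "p \<in> Rcar N \<Longrightarrow> q \<in> Rcar N \<Longrightarrow> p + q \<in> Rcar N"
  unfolding Rcar_def mem_Collect_eq
proof (intro ballI)
  fix m assume "\<forall>m\<in>Poly_Mapping.keys p. Poly_Mapping.keys m \<subseteq> N" "\<forall>m\<in>Poly_Mapping.keys q. Poly_Mapping.keys m \<subseteq> N"
    "m \<in> Poly_Mapping.keys (p + q)"
  moreover have "m \<in> Poly_Mapping.keys p \<union> Poly_Mapping.keys q" using keys_add[of p q] calculation(3) by fast
  ultimately show "Poly_Mapping.keys m \<subseteq> N" by fast
qed

lemma Rcar_uminus: "p \<in> Rcar N \<Longrightarrow> - p \<in> Rcar N"
  unfolding Rcar_def by (simp add: keys_uminus)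

lemma Rcar_diff: "p \<in> Rcar N \<Longrightarrow> q \<in> Rcar N \<Longrightarrow> p - q \<in> Rcar N"
  by (metis diff_conv_add_uminus Rcar_add Rcar_uminus)

lemma Rcar_mult: "p \<in> Rcar N \<Longrightarrow> q \<in> Rcar N \<Longrightarrow> p * q \<in> Rcar N"
  unfolding Rcar_def mem_Collect_eq
proof (intro ballI subsetI)
  fix m x assume p: "\<forall>m\<in>Poly_Mapping.keys p. Poly_Mapping.keys m \<subseteq> N"
    and q: "\<forall>m\<in>Poly_Mapping.keys q. Poly_Mapping.keys m \<subseteq> N"
    and m: "m \<in> Poly_Mapping.keys (p * q)" and x: "x \<in> Poly_Mapping.keys m"
  obtain a b where ab: "m = a + b" "a \<in> Poly_Mapping.keys p" "b \<in> Poly_Mapping.keys q"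
    using keys_mult[of p q] m by blast
  have "x \<in> Poly_Mapping.keys a \<union> Poly_Mapping.keys b"
    using keys_add[of a b] x ab(1) by blast
  then show "x \<in> N" using p q ab by blast
qed

lemma Rcar_zero: "0 \<in> Rcar N" by (simp add: Rcar_def)
lemma Rcar_one: "1 \<in> Rcar N" by (simp add: Rcar_def)
lemma Rcar_Xv: "a \<in> N \<Longrightarrow> Xv a \<in> Rcar N" by (simp add: Rcar_def Xv_def)
lemma Rcar_single: "Poly_Mapping.keys m \<subseteq> N \<Longrightarrow> Poly_Mapping.single m c \<in> Rcar N"
  by (simp add: Rcar_def)

lemma Rcar_sum: "finite F \<Longrightarrow> (\<And>x. x \<in> F \<Longrightarrow> f x \<in> Rcar N) \<Longrightarrow> sum f F \<in> Rcar N"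
  by (induction F rule: finite_induct) (auto intro: Rcar_add Rcar_zero)

lemma gen_ideal_is_ideal:
  fixes G :: "'k::field mpoly set"
  assumes "G \<subseteq> Rcar N"
  shows "is_ideal (Rcar N) (gen_ideal (Rcar N) G)"
  unfolding is_ideal_def
proof (intro conjI ballI)
  show "gen_ideal (Rcar N) G \<subseteq> Rcar N"
  proof
    fix x :: "'k mpoly" assume "x \<in> gen_ideal (Rcar N) G"
    then obtain F c where x: "x = (\<Sum>g\<in>F. c g * g)" "finite F" "F \<subseteq> G" "\<forall>g\<in>F. c g \<in> Rcar N"
      unfolding gen_ideal_def by blast
    show "x \<in> Rcar N" unfolding x(1)
      by (rule Rcar_sum[OF x(2)]) (use x assms in \<open>auto intro: Rcar_mult\<close>)
  qed
  show "0 \<in> gen_ideal (Rcar N) G"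
    unfolding gen_ideal_def by (rule CollectI, rule exI[of _ "{}"]) auto
next
  fix x y :: "'k mpoly" assume "x \<in> gen_ideal (Rcar N) G" "y \<in> gen_ideal (Rcar N) G"
  then obtain F1 c1 F2 c2 where x: "x = (\<Sum>g\<in>F1. c1 g * g)" "finite F1" "F1 \<subseteq> G" "\<forall>g\<in>F1. c1 g \<in> Rcar N"
    and y: "y = (\<Sum>g\<in>F2. c2 g * g)" "finite F2" "F2 \<subseteq> G" "\<forall>g\<in>F2. c2 g \<in> Rcar N"
    unfolding gen_ideal_def by blast
  define c where "c g = (if g \<in> F1 then c1 g else 0) + (if g \<in> F2 then c2 g else 0)" for g
  have "x = (\<Sum>g\<in>F1 \<union> F2. (if g \<in> F1 then c1 g else 0) * g)"
    unfolding x(1) using x(2) y(2) by (intro sum.mono_neutral_cong_left) auto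
  moreover have "y = (\<Sum>g\<in>F1 \<union> F2. (if g \<in> F2 then c2 g else 0) * g)"
    unfolding y(1) using x(2) y(2) by (intro sum.mono_neutral_cong_left) auto
  ultimately have "x + y = (\<Sum>g\<in>F1 \<union> F2. c g * g)"
    by (simp add: c_def sum.distrib[symmetric] distrib_right)
  moreover have "\<forall>g\<in>F1 \<union> F2. c g \<in> Rcar N"
    using x y by (auto simp: c_def intro: Rcar_add Rcar_zero)
  ultimately show "x + y \<in> gen_ideal (Rcar N) G"
    unfolding gen_ideal_def using x y by blast
next
  fix a x :: "'k mpoly" assume a: "a \<in> Rcar N" and "x \<in> gen_ideal (Rcar N) G"
  then obtain F c where x: "x = (\<Sum>g\<in>F. c g * g)" "finite F" "F \<subseteq> G" "\<forall>g\<in>F. c g \<in> Rcar N"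
    unfolding gen_ideal_def by blast
  have "a * x = (\<Sum>g\<in>F. (a * c g) * g)"
    using x by (simp add: sum_distrib_left mult.assoc)
  then show "a * x \<in> gen_ideal (Rcar N) G"
    unfolding gen_ideal_def using x a by (force intro: Rcar_mult)
qed

lemma gen_ideal_gen: "g \<in> G \<Longrightarrow> g \<in> gen_ideal (Rcar N) G"
  unfolding gen_ideal_def
  by (rule CollectI, rule exI[of _ "{g}"], rule exI[of _ "\<lambda>_. 1"]) (simp add: Rcar_one)

lemma ideal_sum: "finite F \<Longrightarrow> is_ideal A J \<Longrightarrow> (\<And>x. x \<in> F \<Longrightarrow> f x \<in> J) \<Longrightarrow> sum f F \<in> J"
  by (induction F rule: finite_induct) (auto simp: is_ideal_def)

lemma gen_ideal_least:
  fixes G :: "'k::field mpoly set"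
  assumes "is_ideal (Rcar N) J" "G \<subseteq> J"
  shows "gen_ideal (Rcar N) G \<subseteq> J"
proof
  fix x assume "x \<in> gen_ideal (Rcar N) G"
  then obtain F c where x: "x = (\<Sum>g\<in>F. c g * g)" "finite F" "F \<subseteq> G" "\<forall>g\<in>F. c g \<in> Rcar N"
    unfolding gen_ideal_def by blast
  show "x \<in> J" unfolding x(1)
  proof (rule ideal_sum[OF x(2) assms(1)])
    fix g assume "g \<in> F"
    then show "c g * g \<in> J" using x assms unfolding is_ideal_def by blast
  qed
qed

end

lemma ideal_mult: "is_ideal A J \<Longrightarrow> a \<in> A \<Longrightarrow> x \<in> J \<Longrightarrow> a * x \<in> J"
  by (simp add: is_ideal_def)
lemma ideal_mult2: "is_ideal A J \<Longrightarrow> a \<in> A \<Longrightarrow> x \<in> J \<Longrightarrow> x * a \<in> J"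
  by (simp add: is_ideal_def mult.commute)
lemma ideal_add: "is_ideal A J \<Longrightarrow> x \<in> J \<Longrightarrow> y \<in> J \<Longrightarrow> x + y \<in> J"
  by (simp add: is_ideal_def)



lemma switch_single: "switch {i} a b = a(i := b i)"
  by (auto simp: switch_def)

lemma NsetD_out: "a \<in> Nset n r \<Longrightarrow> k \<notin> {1..n} \<Longrightarrow> a k = 0"
  unfolding Nset_def by blast

lemma NsetD_in: "a \<in> Nset n r \<Longrightarrow> k \<in> {1..n} \<Longrightarrow> a k \<in> {1..r k}"
  unfolding Nset_def by blast

lemma Nset_switch: "a \<in> Nset n r \<Longrightarrow> b \<in> Nset n r \<Longrightarrow> switch L a b \<in> Nset n r"
  by (auto simp: Nset_def switch_def)

lemma Nset_upd: "a \<in> Nset n r \<Longrightarrow> b \<in> Nset n r \<Longrightarrow> a(i := b i) \<in> Nset n r"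
  using Nset_switch[of a n r b "{i}"] by (simp add: switch_single)

lemma Nset_eqI: "a \<in> Nset n r \<Longrightarrow> b \<in> Nset n r \<Longrightarrow> (\<And>k. k \<in> {1..n} \<Longrightarrow> a k = b k) \<Longrightarrow> a = b"
proof (rule ext)
  fix x assume a: "a \<in> Nset n r" and b: "b \<in> Nset n r" and e: "\<And>k. k \<in> {1..n} \<Longrightarrow> a k = b k"
  show "a x = b x"
  proof (cases "x \<in> {1..n}")
    case True then show ?thesis using e by blast
  next
    case False then show ?thesis using a b unfolding Nset_def mem_Collect_eq by metis
  qed
qed

lemma dst_sym: "dst n a b = dst n b a"
  unfolding dst_def by (metis (no_types, lifting))

lemma dst_le1:
  assumes "a \<in> Nset n r" "b \<in> Nset n r" "dst n a b \<le> 1"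
  obtains l where "\<And>k. k \<noteq> l \<Longrightarrow> a k = b k"
proof -
  let ?D = "{i \<in> {1..n}. a i \<noteq> b i}"
  have fin: "finite ?D" by simp
  have "card ?D \<le> 1" using assms(3) by (simp add: dst_def)
  then have all: "\<forall>x\<in>?D. \<forall>y\<in>?D. x = y" using card_le_Suc0_iff_eq[OF fin] by simp
  have "\<exists>l. ?D \<subseteq> {l}"
  proof (cases "?D = {}")
    case True then show ?thesis by blast
  next
    case False then obtain x where "x \<in> ?D" by blast
    then show ?thesis using all by blast
  qed
  then obtain l where D: "?D \<subseteq> {l}" by blast
  have "a k = b k" if k: "k \<noteq> l" for k
  proof (cases "k \<in> {1..n}")
    case True
    show ?thesis
    proof (rule ccontr)
      assume "a k \<noteq> b k"
      with True have "k \<in> ?D" by simp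
      with D k show False by blast
    qed
  next
    case False
    then show ?thesis using NsetD_out[OF assms(1)] NsetD_out[OF assms(2)] by simp
  qed
  then show ?thesis using that by blast
qed

lemma dst_le2:
  assumes "\<And>k. k \<noteq> i \<Longrightarrow> k \<noteq> l \<Longrightarrow> u k = v k"
  shows "dst n u v \<le> 2"
proof -
  have "{j \<in> {1..n}. u j \<noteq> v j} \<subseteq> {i, l}" using assms by auto
  then have "card {j \<in> {1..n}. u j \<noteq> v j} \<le> card {i, l}"
    by (intro card_mono) auto
  also have "\<dots> \<le> 2" by (simp add: card_insert_if)
  finally show ?thesis by (simp add: dst_def)
qed

lemma fpol_sym: "fpol i a b = fpol i b a"
  by (simp add: fpol_def mult.commute)

lemma fpol_upd: "fpol i a b = Xv a * Xv b - Xv (a(i := b i)) * Xv (b(i := a i))"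
  by (simp add: fpol_def switch_single)

lemma fpol_self: "fpol i a a = 0"
  by (simp add: fpol_upd)

lemma fpol_zero:
  assumes "a \<in> Nset n r" "b \<in> Nset n r" "dst n a b \<le> 1"
  shows "fpol i a b = 0"
proof -
  obtain l where l: "\<And>k. k \<noteq> l \<Longrightarrow> a k = b k" using dst_le1[OF assms] by blast
  show ?thesis
  proof (cases "i = l")
    case True
    then have "a(i := b i) = b" "b(i := a i) = a" using l by (auto simp: fun_eq_iff)
    then show ?thesis by (simp add: fpol_upd mult.commute)
  next
    case False
    then have "a(i := b i) = a" "b(i := a i) = b" using l by (auto simp: fun_eq_iff)
    then show ?thesis by (simp add: fpol_upd)
  qed
qed

lemma I_t_ideal: "is_ideal (Rcar (Nset n r)) (I_t n r t :: 'k::field mpoly set)"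
  unfolding I_t_def
  by (rule gen_ideal_is_ideal) (auto simp: fpol_def intro!: Rcar_diff Rcar_mult Rcar_Xv Nset_switch)

lemma fpol_in_I:
  assumes "u \<in> Nset n r" "v \<in> Nset n r" "i \<in> {1..t}" "\<And>k. k \<noteq> i \<Longrightarrow> k \<noteq> l \<Longrightarrow> u k = v k"
  shows "(fpol i u v :: 'k::field mpoly) \<in> I_t n r t"
proof (cases "dst n u v = 2")
  case True
  then show ?thesis unfolding I_t_def
    by (intro gen_ideal_gen) (use assms in blast)
next
  case False
  moreover have "dst n u v \<le> 2" using dst_le2[of i l u v n] assms(4) by blast
  ultimately have "dst n u v \<le> 1" by linarith
  then have "fpol i u v = (0 :: 'k mpoly)" using fpol_zero assms by blast
  moreover have "(0::'k mpoly) \<in> I_t n r t" using I_t_ideal unfolding is_ideal_def by blast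
  ultimately show ?thesis by simp
qed

lemma fpol_Rcar: "a \<in> Nset n r \<Longrightarrow> b \<in> Nset n r \<Longrightarrow> fpol i a b \<in> Rcar (Nset n r)"
  by (auto simp: fpol_def intro!: Rcar_diff Rcar_mult Rcar_Xv Nset_switch)

lemma idA: "(c::'a::comm_ring_1) * (u*v - a*b) = v*(u*c - a*c') - a*(c*b - c'*v)"
  by (simp add: algebra_simps)

lemma idB: "(Cg::'a::comm_ring_1) * (A1a * (Aa*Bg - Ba*Ag)) =
   Bg*A1a*(Aa*Cg - Ca*Ag) + Ag*Ca*(A1a*Bg - Ba*A1g) - Ba*Ag*(A1a*Cg - Ca*A1g)"
  by (simp add: algebra_simps)

definition SP :: "nat \<Rightarrow> (nat \<Rightarrow> nat) \<Rightarrow> 'k::field mpoly set \<Rightarrow> (nat \<Rightarrow> nat) set" where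
  "SP n r P = {a \<in> Nset n r. Xv a \<notin> P}"

context
  fixes n t :: nat and r :: "nat \<Rightarrow> nat" and P :: "'k::field mpoly set"
  assumes prime: "prime_ideal (Rcar (Nset n r)) P" and IP: "I_t n r t \<subseteq> P"
begin

lemma P_ideal: "is_ideal (Rcar (Nset n r)) P"
  using prime by (simp add: prime_ideal_def)

lemma P_prime: "x \<in> Rcar (Nset n r) \<Longrightarrow> y \<in> Rcar (Nset n r) \<Longrightarrow> x * y \<in> P \<Longrightarrow> x \<in> P \<or> y \<in> P"
  using prime by (simp add: prime_ideal_def)

lemma P_cancel: "c \<in> Nset n r \<Longrightarrow> Xv c \<notin> P \<Longrightarrow> y \<in> Rcar (Nset n r) \<Longrightarrow> Xv c * y \<in> P \<Longrightarrow> y \<in> P"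
  using P_prime Rcar_Xv by blast

lemma P_diff: "x \<in> P \<Longrightarrow> y \<in> P \<Longrightarrow> x - y \<in> P"
proof -
  assume "x \<in> P" "y \<in> P"
  then have "(- 1) * y \<in> P" using P_ideal Rcar_one Rcar_uminus unfolding is_ideal_def by blast
  then show ?thesis using \<open>x \<in> P\<close> P_ideal unfolding is_ideal_def by (metis diff_conv_add_uminus mult_minus1)
qed

lemma P_mult: "a \<in> Rcar (Nset n r) \<Longrightarrow> x \<in> P \<Longrightarrow> a * x \<in> P"
  using P_ideal by (simp add: is_ideal_def)

lemma caseA:
  assumes u: "u \<in> Nset n r" and v: "v \<in> Nset n r" and c: "c \<in> Nset n r" and i: "i \<in> {1..t}"
    and ci: "c i = v i" and l: "\<And>k. k \<noteq> l \<Longrightarrow> c k = v k"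
    and fc: "fpol i u c \<in> P" and Xc: "Xv c \<notin> P"
  shows "fpol i u v \<in> P"
proof -
  let ?a = "u(i := v i)" and ?b = "v(i := u i)" and ?c = "c(i := u i)"
  have e1: "fpol i u c = Xv u * Xv c - Xv ?a * Xv ?c" using ci by (simp add: fpol_upd)
  have "v(i := u i, i := c i) = v" using ci by simp
  then have e2: "fpol i c ?b = Xv c * Xv ?b - Xv ?c * Xv v" by (simp add: fpol_upd)
  have "fpol i c ?b \<in> I_t n r t"
    by (rule fpol_in_I[where l = l]) (use c v u i l in \<open>auto intro: Nset_upd\<close>)
  then have "fpol i c ?b \<in> P" using IP by blast
  then have "Xv v * fpol i u c - Xv ?a * fpol i c ?b \<in> P"
    using fc by (intro P_diff P_mult Rcar_Xv Nset_upd u v c)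
  then have "Xv c * (Xv u * Xv v - Xv ?a * Xv ?b) \<in> P"
    unfolding e1 e2 idA[of "Xv c" "Xv u" "Xv v" "Xv ?a" "Xv ?b" "Xv ?c"] .
  then have "Xv c * fpol i u v \<in> P" by (simp add: fpol_upd)
  then show ?thesis using P_cancel[OF c Xc] fpol_Rcar[OF u v] by blast
qed

lemma SP_switchable: "switchable n r t (SP n r P)"
  unfolding switchable_def
proof (intro conjI ballI impI)
  show "SP n r P \<subseteq> Nset n r" by (auto simp: SP_def)
next
  fix a b i assume a: "a \<in> SP n r P" and b: "b \<in> SP n r P" and d: "dst n a b = 2" and i: "i \<in> {1..t}"
  have aN: "a \<in> Nset n r" and bN: "b \<in> Nset n r" and Xa: "Xv a \<notin> P" and Xb: "Xv b \<notin> P"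
    using a b by (auto simp: SP_def)
  have "fpol i a b \<in> I_t n r t" unfolding I_t_def
    by (intro gen_ideal_gen) (use aN bN d i in blast)
  then have f: "fpol i a b \<in> P" using IP by blast
  have ab: "Xv a * Xv b \<notin> P" using P_prime[OF Rcar_Xv[OF aN] Rcar_Xv[OF bN]] Xa Xb by blast
  show "switch {i} a b \<in> SP n r P"
  proof (rule ccontr)
    assume "switch {i} a b \<notin> SP n r P"
    then have "Xv (switch {i} a b) \<in> P" using Nset_switch[OF aN bN] by (auto simp: SP_def)
    then have "Xv (switch {i} b a) * Xv (switch {i} a b) \<in> P"
      by (intro P_mult Rcar_Xv Nset_switch bN aN)
    then have "fpol i a b + Xv (switch {i} b a) * Xv (switch {i} a b) \<in> P"
      using f P_ideal by (simp add: is_ideal_def)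
    then have "Xv a * Xv b \<in> P" by (simp add: fpol_def mult.commute)
    then show False using ab by blast
  qed
qed

end



definition adjE :: "nat \<Rightarrow> (nat \<Rightarrow> nat) set \<Rightarrow> (nat \<Rightarrow> nat) \<Rightarrow> (nat \<Rightarrow> nat) \<Rightarrow> bool" where
  "adjE n S x y \<longleftrightarrow> x \<in> S \<and> y \<in> S \<and> dst n x y \<le> 1"

lemma connected_in_adjE: "connected_in n S a b \<longleftrightarrow> a \<in> S \<and> b \<in> S \<and> (adjE n S)\<^sup>*\<^sup>* a b"
proof -
  have "adjE n S = (\<lambda>x y. x \<in> S \<and> y \<in> S \<and> dst n x y \<le> 1)" by (auto simp: adjE_def fun_eq_iff)
  then show ?thesis by (simp add: connected_in_def)
qed

context
  fixes n t :: nat and r :: "nat \<Rightarrow> nat" and P :: "'k::field mpoly set"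
  assumes prime: "prime_ideal (Rcar (Nset n r)) P" and IP: "I_t n r t \<subseteq> P"
begin

lemma path_fpol:
  "(adjE n (SP n r P) ^^ k) a b \<Longrightarrow> i \<in> {1..t} \<Longrightarrow> fpol i a b \<in> P"
proof (induction k arbitrary: a b rule: less_induct)
  case (less k)
  let ?E = "adjE n (SP n r P)"
  have zeroP: "(0::'k mpoly) \<in> P" using P_ideal[OF prime IP] by (simp add: is_ideal_def)
  have EN: "x \<in> Nset n r \<and> y \<in> Nset n r \<and> Xv x \<notin> P \<and> Xv y \<notin> P \<and> dst n x y \<le> 1" if "?E x y" for x y
    using that by (auto simp: adjE_def SP_def)
  consider "k = 0" | "k = Suc 0" | m where "k = Suc (Suc m)" by (metis not0_implies_Suc)
  then show ?case
  proof cases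
    case 1
    then have "a = b" using less.prems(1) by (auto elim: relpowp_0_E)
    then show ?thesis using zeroP by (simp add: fpol_self)
  next
    case 2
    then have "?E a b" using less.prems(1) by (simp only: relpowp_Suc_0)
    then have "(fpol i a b :: 'k mpoly) = 0" using EN fpol_zero by blast
    then show ?thesis using zeroP by simp
  next
    case 3
    have R0: "(?E ^^ Suc (Suc m)) a b" using less.prems(1) unfolding 3 .
    obtain a1 where Ea: "?E a a1" and R1: "(?E ^^ Suc m) a1 b"
      using R0 by (rule relpowp_Suc_E2)
    obtain c where R2: "(?E ^^ m) a1 c" and Ec: "?E c b"
      using R1 by (rule relpowp_Suc_E)
    have R3: "(?E ^^ Suc m) a c" by (rule relpowp_Suc_I2[OF Ea R2])
    have i: "i \<in> {1..t}" by fact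
    have fac: "fpol i a c \<in> P" using less.IH[OF _ R3 i] 3 by simp
    have fa1b: "fpol i a1 b \<in> P" using less.IH[OF _ R1 i] 3 by simp
    have fa1c: "fpol i a1 c \<in> P" using less.IH[OF _ R2 i] 3 by simp
    have aN: "a \<in> Nset n r" and a1N: "a1 \<in> Nset n r" and Xa1: "Xv a1 \<notin> P" and bN: "b \<in> Nset n r"
      and cN: "c \<in> Nset n r" and Xc: "Xv c \<notin> P"
      using EN[OF Ea] EN[OF Ec] by auto
    obtain l1 where l1: "\<And>k. k \<noteq> l1 \<Longrightarrow> a k = a1 k" using dst_le1 EN[OF Ea] by blast
    obtain l2 where l2: "\<And>k. k \<noteq> l2 \<Longrightarrow> c k = b k" using dst_le1 EN[OF Ec] by blast
    show ?thesis
    proof (cases "c i = b i")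
      case True
      show ?thesis by (rule caseA[OF prime IP aN bN cN i True l2 fac Xc])
    next
      case cb: False
      show ?thesis
      proof (cases "a1 i = a i")
        case True
        have fb: "fpol i b a1 \<in> P" using fa1b by (simp add: fpol_sym)
        have l1': "\<And>k. k \<noteq> l1 \<Longrightarrow> a1 k = a k" using l1 by metis
        have "fpol i b a \<in> P"
          by (rule caseA[OF prime IP bN aN a1N i True l1' fb Xa1])
        then show ?thesis by (simp add: fpol_sym)
      next
        case aa: False
        define p where "p = a1 i"
        define q where "q = b i"
        have "l2 = i" using l2 cb by metis
        then have bdef: "b = c(i := q)" using l2 by (auto simp: q_def fun_eq_iff)
        have "l1 = i" using l1 aa by metis
        then have a1def: "a1 = a(i := p)" using l1 by (auto simp: p_def fun_eq_iff)
        let ?Aa = "Xv a :: 'k mpoly" and ?Cg = "Xv c :: 'k mpoly" and ?Ca = "Xv (a(i := c i)) :: 'k mpoly"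
          and ?Ag = "Xv (c(i := a i)) :: 'k mpoly" and ?A1a = "Xv (a(i := p)) :: 'k mpoly"
          and ?A1g = "Xv (c(i := p)) :: 'k mpoly" and ?Bg = "Xv (c(i := q)) :: 'k mpoly"
          and ?Ba = "Xv (a(i := q)) :: 'k mpoly"
        have e1: "fpol i a c = ?Aa * ?Cg - ?Ca * ?Ag" by (simp add: fpol_upd)
        have e2: "fpol i a1 c = ?A1a * ?Cg - ?Ca * ?A1g" by (simp add: fpol_upd a1def)
        have e3: "fpol i a1 b = ?A1a * ?Bg - ?Ba * ?A1g" by (simp add: fpol_upd a1def bdef)
        have e4: "fpol i a b = ?Aa * ?Bg - ?Ba * ?Ag" by (simp add: fpol_upd bdef)
        have RN: "\<And>x. x \<in> Nset n r \<Longrightarrow> Xv x \<in> Rcar (Nset n r)" by (rule Rcar_Xv)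
        have mem: "c(i := q) \<in> Nset n r" "a(i := p) \<in> Nset n r" "a(i := q) \<in> Nset n r"
          "c(i := p) \<in> Nset n r" "a(i := c i) \<in> Nset n r" "c(i := a i) \<in> Nset n r"
          subgoal using bN bdef by simp
          subgoal using a1N a1def by simp
          subgoal using Nset_upd[OF aN bN, of i] q_def by simp
          subgoal using Nset_upd[OF cN a1N, of i] p_def by simp
          subgoal using Nset_upd[OF aN cN, of i] by simp
          subgoal using Nset_upd[OF cN aN, of i] by simp
          done
        have "?Bg * ?A1a * fpol i a c + ?Ag * ?Ca * fpol i a1 b - ?Ba * ?Ag * fpol i a1 c \<in> P"
          using fac fa1b fa1c
          by (intro P_diff[OF prime IP] ideal_add[OF P_ideal[OF prime IP]] P_mult[OF prime IP]
               Rcar_mult RN mem)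
        then have "?Cg * (?A1a * fpol i a b) \<in> P"
          unfolding e1 e2 e3 e4 idB[of ?Cg ?A1a ?Aa ?Bg ?Ba ?Ag ?Ca ?A1g] .
        moreover have "?A1a * fpol i a b \<in> Rcar (Nset n r)"
          by (rule Rcar_mult[OF RN[OF mem(2)] fpol_Rcar[OF aN bN]])
        ultimately have "?A1a * fpol i a b \<in> P"
          using P_cancel[OF prime IP cN Xc] by blast
        moreover have "Xv (a(i := p)) \<notin> P" using Xa1 a1def by simp
        ultimately show ?thesis
          using P_cancel[OF prime IP mem(2)] fpol_Rcar[OF aN bN] by blast
      qed
    qed
  qed
qed

lemma connected_fpol:
  assumes "connected_in n (SP n r P) a b" "i \<in> {1..t}"
  shows "fpol i a b \<in> P"
proof -
  obtain k where "(adjE n (SP n r P) ^^ k) a b"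
    using assms(1) unfolding connected_in_adjE by (auto dest: rtranclp_imp_relpowp)
  then show ?thesis using path_fpol assms(2) by blast
qed

lemma P_S_SP_subset: "P_S n r t (SP n r P) \<subseteq> P"
  unfolding P_S_def
proof (rule gen_ideal_least[OF P_ideal[OF prime IP]])
  show "{Xv a |a. a \<in> Nset n r \<and> a \<notin> SP n r P} \<union>
    {fpol i a b |i a b. i \<in> {1..t} \<and> connected_in n (SP n r P) a b} \<subseteq> P"
    using connected_fpol by (auto simp: SP_def)
qed

end



type_synonym vv = "nat list \<times> nat list \<times> nat \<times> nat"

lemma keys_add_nat: "Poly_Mapping.keys ((m::'a \<Rightarrow>\<^sub>0 nat) + m') = Poly_Mapping.keys m \<union> Poly_Mapping.keys m'"
  by (rule set_eqI) (simp only: in_keys_iff lookup_add Un_iff add_eq_0_iff_both_eq_0 de_Morgan_conj)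

lemma sum_keys_ext:
  assumes "finite U" "Poly_Mapping.keys m \<subseteq> U" "\<And>x. f x 0 = 0"
  shows "(\<Sum>a\<in>Poly_Mapping.keys m. f a (poly_mapping.lookup m a)) = (\<Sum>a\<in>U. f a (poly_mapping.lookup m a))"
proof (rule sum.mono_neutral_left[OF assms(1,2)])
  show "\<forall>i\<in>U - Poly_Mapping.keys m. f i (poly_mapping.lookup m i) = 0"
    using assms(3) by (simp add: in_keys_iff)
qed

locale tor =
  fixes n t :: nat and S :: "(nat \<Rightarrow> nat) set"
begin

definition cnt :: "(nat \<Rightarrow> nat) \<Rightarrow> vv \<Rightarrow> nat" where
  "cnt a = (\<lambda>(c0, l0, j0, x0).
     (if c0 = Min ((\<lambda>u. map u [0..<Suc n]) ` {u. connected_in n S a u}) \<and> l0 = map a [Suc t..<Suc n] \<and> j0 = 0 \<and> x0 = 0 then 1 else 0)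
   + (if c0 = Min ((\<lambda>u. map u [0..<Suc n]) ` {u. connected_in n S a u}) \<and> l0 = [] \<and> j0 \<in> {1..t} \<and> x0 = a j0 then 1 else 0))"

definition code :: "(nat \<Rightarrow> nat) \<Rightarrow> nat list" where
  "code a = Min ((\<lambda>u. map u [0..<Suc n]) ` {u. connected_in n S a u})"

definition tl' :: "(nat \<Rightarrow> nat) \<Rightarrow> nat list" where
  "tl' a = map a [Suc t..<Suc n]"

lemma cnt_def': "cnt a (c0, l0, j0, x0) =
     (if c0 = code a \<and> l0 = tl' a \<and> j0 = 0 \<and> x0 = 0 then 1 else 0)
   + (if c0 = code a \<and> l0 = [] \<and> j0 \<in> {1..t} \<and> x0 = a j0 then 1 else 0)"
  by (simp add: cnt_def code_def tl'_def)

definition deg :: "((nat \<Rightarrow> nat) \<Rightarrow>\<^sub>0 nat) \<Rightarrow> vv \<Rightarrow> nat" where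
  "deg m v = (\<Sum>a\<in>Poly_Mapping.keys m. poly_mapping.lookup m a * cnt a v)"

lemma cnt_support: "cnt a v \<noteq> 0 \<Longrightarrow> v \<in> {(code a, tl' a, 0, 0)} \<union> (\<lambda>j. (code a, [], j, a j)) ` {1..t}"
  by (cases v) (auto simp: cnt_def' split: if_splits)

lemma deg_support_finite: "finite {v. deg m v \<noteq> 0}"
proof -
  have "{v. deg m v \<noteq> 0} \<subseteq> (\<Union>a\<in>Poly_Mapping.keys m. {(code a, tl' a, 0, 0)} \<union> (\<lambda>j. (code a, [], j, a j)) ` {1..t})"
  proof
    fix v assume "v \<in> {v. deg m v \<noteq> 0}"
    then have "(\<Sum>a\<in>Poly_Mapping.keys m. poly_mapping.lookup m a * cnt a v) \<noteq> 0" by (simp add: deg_def)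
    then obtain a where "a \<in> Poly_Mapping.keys m" "poly_mapping.lookup m a * cnt a v \<noteq> 0"
      by (meson sum.neutral)
    then show "v \<in> (\<Union>a\<in>Poly_Mapping.keys m. {(code a, tl' a, 0, 0)} \<union> (\<lambda>j. (code a, [], j, a j)) ` {1..t})"
      using cnt_support[of a v] by auto
  qed
  moreover have "finite (\<Union>a\<in>Poly_Mapping.keys m. {(code a, tl' a, 0, 0)} \<union> (\<lambda>j. (code a, [], j, a j)) ` {1..t})"
    by simp
  ultimately show ?thesis by (rule finite_subset)
qed

definition EE :: "((nat \<Rightarrow> nat) \<Rightarrow>\<^sub>0 nat) \<Rightarrow> (vv \<Rightarrow>\<^sub>0 nat)" where
  "EE m = Abs_poly_mapping (deg m)"

lemma lookup_EE: "poly_mapping.lookup (EE m) v = deg m v"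
  unfolding EE_def using deg_support_finite by (simp add: lookup_Abs_poly_mapping)

lemma deg_ext: "finite U \<Longrightarrow> Poly_Mapping.keys m \<subseteq> U \<Longrightarrow> deg m v = (\<Sum>a\<in>U. poly_mapping.lookup m a * cnt a v)"
  unfolding deg_def by (rule sum_keys_ext[where f = "\<lambda>a x. x * cnt a v"]) auto

lemma deg_add: "deg (m + m') v = deg m v + deg m' v"
proof -
  let ?U = "Poly_Mapping.keys m \<union> Poly_Mapping.keys m'"
  have "deg (m + m') v = (\<Sum>a\<in>?U. poly_mapping.lookup (m + m') a * cnt a v)"
    by (rule deg_ext) (auto simp: keys_add_nat)
  also have "\<dots> = (\<Sum>a\<in>?U. poly_mapping.lookup m a * cnt a v) + (\<Sum>a\<in>?U. poly_mapping.lookup m' a * cnt a v)"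
    by (simp add: lookup_add distrib_right sum.distrib)
  also have "\<dots> = deg m v + deg m' v"
    using deg_ext[of ?U m v] deg_ext[of ?U m' v] by simp
  finally show ?thesis .
qed

lemma EE_add: "EE (m + m') = EE m + EE m'"
  by (rule poly_mapping_eqI) (simp add: lookup_EE lookup_add deg_add)

lemma EE_zero: "EE 0 = 0"
  by (rule poly_mapping_eqI) (simp add: lookup_EE deg_def)

lemma deg_single: "deg (Poly_Mapping.single a 1) v = cnt a v"
  by (simp add: deg_def)

definition gg :: "((nat \<Rightarrow> nat) \<Rightarrow>\<^sub>0 nat) \<Rightarrow> 'k::field \<Rightarrow> (vv \<Rightarrow>\<^sub>0 nat) \<Rightarrow>\<^sub>0 'k" where
  "gg m c = (if Poly_Mapping.keys m \<subseteq> S then Poly_Mapping.single (EE m) c else 0)"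

definition Phi :: "'k::field mpoly \<Rightarrow> (vv \<Rightarrow>\<^sub>0 nat) \<Rightarrow>\<^sub>0 'k" where
  "Phi p = (\<Sum>m\<in>Poly_Mapping.keys p. gg m (poly_mapping.lookup p m))"

lemma gg_zero: "gg m 0 = 0" by (simp add: gg_def)
lemma gg_add: "gg m (c + d) = gg m c + gg m d" by (simp add: gg_def single_add)

lemma Phi_ext: "finite U \<Longrightarrow> Poly_Mapping.keys p \<subseteq> U \<Longrightarrow> Phi p = (\<Sum>m\<in>U. gg m (poly_mapping.lookup p m))"
  unfolding Phi_def by (rule sum_keys_ext) (auto simp: gg_zero)

lemma Phi_add: "Phi (p + q) = Phi p + Phi q"
proof -
  let ?U = "Poly_Mapping.keys p \<union> Poly_Mapping.keys q"
  have "Phi (p + q) = (\<Sum>m\<in>?U. gg m (poly_mapping.lookup (p + q) m))"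
    by (rule Phi_ext) (use keys_add[of p q] in auto)
  also have "\<dots> = Phi p + Phi q"
    using Phi_ext[of ?U p] Phi_ext[of ?U q] by (simp add: lookup_add gg_add sum.distrib)
  finally show ?thesis .
qed

lemma Phi_zero: "Phi 0 = 0" by (simp add: Phi_def)

lemma Phi_single: "Phi (Poly_Mapping.single m c) = gg m c"
  by (cases "c = 0") (simp_all add: Phi_def gg_zero)

lemma Phi_sum: "finite F \<Longrightarrow> Phi (sum f F) = (\<Sum>x\<in>F. Phi (f x))"
  by (induction F rule: finite_induct) (simp_all add: Phi_zero Phi_add)

lemma Phi_diff: "Phi (p - q) = Phi p - Phi q"
proof -
  have "Phi (p - q) + Phi q = Phi p" using Phi_add[of "p - q" q] by simp
  then show ?thesis by (simp add: eq_diff_eq)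
qed

lemma gg_mult: "gg (m + m') (c * d) = gg m c * gg m' d"
  by (simp add: gg_def keys_add_nat EE_add mult_single)

lemma Phi_mult: "Phi (p * q) = Phi p * Phi q"
proof -
  let ?K = "Poly_Mapping.keys p" and ?L = "Poly_Mapping.keys q"
  have pq: "p * q = (\<Sum>m\<in>?K. \<Sum>m'\<in>?L. Poly_Mapping.single (m + m') (poly_mapping.lookup p m * poly_mapping.lookup q m'))"
  proof -
    have "p * q = (\<Sum>m\<in>?K. Poly_Mapping.single m (poly_mapping.lookup p m)) * (\<Sum>m'\<in>?L. Poly_Mapping.single m' (poly_mapping.lookup q m'))"
      using poly_expand[of p] poly_expand[of q] by simp
    also have "\<dots> = (\<Sum>m\<in>?K. \<Sum>m'\<in>?L. Poly_Mapping.single m (poly_mapping.lookup p m) * Poly_Mapping.single m' (poly_mapping.lookup q m'))"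
      by (simp add: sum_product)
    finally show ?thesis by (simp add: mult_single)
  qed
  have "Phi (p * q) = (\<Sum>m\<in>?K. \<Sum>m'\<in>?L. gg m (poly_mapping.lookup p m) * gg m' (poly_mapping.lookup q m'))"
    unfolding pq by (simp add: Phi_sum Phi_single gg_mult)
  also have "\<dots> = Phi p * Phi q"
    by (simp add: Phi_def sum_product)
  finally show ?thesis .
qed

lemma Phi_one: "Phi 1 = 1"
proof -
  have "Phi (1 :: 'k::field mpoly) = Phi (Poly_Mapping.single 0 1)" by simp
  also have "\<dots> = 1" by (simp only: Phi_single) (simp add: gg_def EE_zero)
  finally show ?thesis .
qed

lemma Phi_Xv: "Phi (Xv a :: 'k::field mpoly) = (if a \<in> S then Poly_Mapping.single (EE (Poly_Mapping.single a 1)) 1 else 0)"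
  by (simp add: Xv_def Phi_single gg_def)

lemma idom_test: "(x :: (vv \<Rightarrow>\<^sub>0 nat) \<Rightarrow>\<^sub>0 'k::field) * y = 0 \<Longrightarrow> x = 0 \<or> y = 0"
  by simp

end



lemma single_one_ne [simp]: "Poly_Mapping.single x (1::'b::zero_neq_one) \<noteq> 0"
  by (metis lookup_single_eq lookup_zero one_neq_zero)

lemma dst_le_card: "{k \<in> {1..n}. x k \<noteq> y k} \<subseteq> F \<Longrightarrow> finite F \<Longrightarrow> dst n x y \<le> card F"
  unfolding dst_def by (rule card_mono)

lemma dst_upd_le1: "dst n a (a(i := v)) \<le> 1"
proof -
  have "dst n a (a(i := v)) \<le> card {i}" by (rule dst_le_card) auto
  then show ?thesis by simp
qed

lemma dst_swap: "dst n (a(i := b i)) (b(i := a i)) = dst n a b"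
proof -
  have "{k \<in> {1..n}. (a(i := b i)) k \<noteq> (b(i := a i)) k} = {k \<in> {1..n}. a k \<noteq> b k}" by auto
  then show ?thesis by (simp add: dst_def)
qed

lemma dst_upd_other:
  assumes "dst n a b = 2" "a i \<noteq> b i" "a \<in> Nset n r" "b \<in> Nset n r"
  shows "dst n (a(i := b i)) b \<le> 1"
proof -
  let ?D = "{k \<in> {1..n}. a k \<noteq> b k}"
  have iD: "i \<in> ?D"
  proof -
    have "i \<in> {1..n}" using assms(2) NsetD_out[OF assms(3)] NsetD_out[OF assms(4)] by fastforce
    then show ?thesis using assms(2) by simp
  qed
  have "dst n (a(i := b i)) b \<le> card (?D - {i})" by (rule dst_le_card) auto
  also have "\<dots> = 1" using iD assms(1) by (simp add: dst_def card_Diff_singleton)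
  finally show ?thesis .
qed

context tor begin

lemma adjE_sym: "symp (adjE n S)"
  by (rule sympI) (auto simp: adjE_def dst_sym)

lemma conn_refl: "a \<in> S \<Longrightarrow> connected_in n S a a"
  by (simp add: connected_in_adjE)

lemma conn_sym: "connected_in n S a b \<Longrightarrow> connected_in n S b a"
  unfolding connected_in_adjE using sympD[OF symp_rtranclp[OF adjE_sym]] by blast

lemma conn_trans: "connected_in n S a b \<Longrightarrow> connected_in n S b c \<Longrightarrow> connected_in n S a c"
  unfolding connected_in_adjE by (meson rtranclp_trans)

lemma conn_adj: "a \<in> S \<Longrightarrow> b \<in> S \<Longrightarrow> dst n a b \<le> 1 \<Longrightarrow> connected_in n S a b"
  unfolding connected_in_adjE by (auto simp: adjE_def)

lemma code_eq: "connected_in n S a b \<Longrightarrow> code a = code b"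
proof -
  assume ab: "connected_in n S a b"
  have "{u. connected_in n S a u} = {u. connected_in n S b u}"
    using ab conn_trans conn_sym by blast
  then show ?thesis by (simp add: code_def)
qed

lemma enc_inj:
  assumes "z \<in> Nset n r" "z' \<in> Nset n r" "map z [0..<Suc n] = map z' [0..<Suc n]"
  shows "z = z'"
proof -
  have h: "\<forall>k\<in>set [0..<Suc n]. z k = z' k" using assms(3) by (simp only: map_eq_conv)
  have "\<And>k. k \<in> {1..n} \<Longrightarrow> z k = z' k"
  proof -
    fix k :: nat assume "k \<in> {1..n}"
    then have "k \<in> set [0..<Suc n]" by auto
    then show "z k = z' k" using h by blast
  qed
  then show ?thesis using Nset_eqI[OF assms(1,2)] by blast
qed

lemma enc_fin: "finite ((\<lambda>u. map u [0..<Suc n]) ` Nset n r)"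
proof -
  let ?M = "\<Sum>k\<le>n. r k"
  have "(\<lambda>u. map u [0..<Suc n]) ` Nset n r \<subseteq> {xs. set xs \<subseteq> {0..?M} \<and> length xs = Suc n}"
  proof (rule subsetI)
    fix xs assume "xs \<in> (\<lambda>u. map u [0..<Suc n]) ` Nset n r"
    then obtain u where u: "u \<in> Nset n r" and xs: "xs = map u [0..<Suc n]" by blast
    have "u k \<le> ?M" for k
    proof (cases "k \<in> {1..n}")
      case True
      then have "u k \<le> r k" using NsetD_in[OF u] by auto
      also have "r k \<le> ?M" using True by (intro member_le_sum) auto
      finally show ?thesis .
    next
      case False then show ?thesis using NsetD_out[OF u] by simp
    qed
    then show "xs \<in> {xs. set xs \<subseteq> {0..?M} \<and> length xs = Suc n}" using xs by auto
  qed
  moreover have "finite {xs. set xs \<subseteq> {0..?M} \<and> length xs = Suc n}"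
    by (rule finite_lists_length_eq) simp
  ultimately show ?thesis by (rule finite_subset)
qed

lemma code_mem:
  assumes SN: "S \<subseteq> Nset n r" and a: "a \<in> S"
  obtains z where "connected_in n S a z" "code a = map z [0..<Suc n]"
proof -
  let ?C = "{u. connected_in n S a u}"
  have "?C \<subseteq> Nset n r" using SN by (auto simp: connected_in_def)
  then have fin: "finite ((\<lambda>u. map u [0..<Suc n]) ` ?C)"
    using enc_fin[of r] finite_subset by (meson image_mono)
  have ne: "(\<lambda>u. map u [0..<Suc n]) ` ?C \<noteq> {}" using conn_refl[OF a] by blast
  have "code a \<in> (\<lambda>u. map u [0..<Suc n]) ` ?C"
    unfolding code_def by (rule Min_in[OF fin ne])
  then show ?thesis using that by blast
qed

lemma code_conn:
  assumes SN: "S \<subseteq> Nset n r" and a: "a \<in> S" and b: "b \<in> S" and e: "code a = code b"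
  shows "connected_in n S a b"
proof -
  obtain z where z: "connected_in n S a z" "code a = map z [0..<Suc n]" using code_mem[OF SN a] by blast
  obtain z' where z': "connected_in n S b z'" "code b = map z' [0..<Suc n]" using code_mem[OF SN b] by blast
  have "z \<in> Nset n r" "z' \<in> Nset n r" using z z' SN by (auto simp: connected_in_def)
  then have "z = z'" using enc_inj z z' e by metis
  then show ?thesis using z z' conn_sym conn_trans by blast
qed

lemma tl_upd: "i \<in> {1..t} \<Longrightarrow> tl' (a(i := x)) = tl' a"
  by (auto simp: tl'_def)

lemma cnt_swap:
  assumes "code a = C" "code b = C" "code (a(i := b i)) = C" "code (b(i := a i)) = C" "i \<in> {1..t}"
  shows "cnt a v + cnt b v = cnt (a(i := b i)) v + cnt (b(i := a i)) v"
proof -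
  obtain c0 l0 j0 x0 where v: "v = (c0, l0, j0, x0)" by (cases v) auto
  show ?thesis unfolding v cnt_def' using assms tl_upd[OF assms(5)] by (cases "j0 = i") auto
qed

lemma EE_swap:
  assumes "code a = C" "code b = C" "code (a(i := b i)) = C" "code (b(i := a i)) = C" "i \<in> {1..t}"
  shows "EE (Poly_Mapping.single a 1 + Poly_Mapping.single b 1)
       = EE (Poly_Mapping.single (a(i := b i)) 1 + Poly_Mapping.single (b(i := a i)) 1)"
  by (rule poly_mapping_eqI) (simp only: lookup_EE deg_add deg_single cnt_swap[OF assms])

lemma Phi_XX: "Phi (Xv a * Xv b :: 'k::field mpoly) =
   (if a \<in> S \<and> b \<in> S then Poly_Mapping.single (EE (Poly_Mapping.single a 1 + Poly_Mapping.single b 1)) 1 else 0)"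
  by (simp add: Phi_mult Phi_Xv mult_single EE_add)

definition Qs :: "(nat \<Rightarrow> nat) \<Rightarrow> 'k::field mpoly set" where
  "Qs r = {p \<in> Rcar (Nset n r). Phi p = 0}"

lemma Q_prime: "prime_ideal (Rcar (Nset n r)) (Qs r :: 'k::field mpoly set)"
  unfolding prime_ideal_def is_ideal_def
proof (intro conjI ballI impI)
  show "(Qs r :: 'k mpoly set) \<subseteq> Rcar (Nset n r)" by (auto simp: Qs_def)
  show "(0 :: 'k mpoly) \<in> Qs r" by (simp add: Qs_def Phi_zero Rcar_zero)
  show "(Qs r :: 'k mpoly set) \<noteq> Rcar (Nset n r)"
  proof
    assume "Qs r = (Rcar (Nset n r) :: 'k mpoly set)"
    moreover have "(1::'k mpoly) \<in> Rcar (Nset n r)" by (rule Rcar_one)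
    ultimately have "(1::'k mpoly) \<in> Qs r" by simp
    then show False by (simp add: Qs_def Phi_one)
  qed
next
  fix x y :: "'k mpoly" assume "x \<in> Qs r" "y \<in> Qs r"
  then show "x + y \<in> Qs r" by (simp add: Qs_def Phi_add Rcar_add)
next
  fix a x :: "'k mpoly" assume "a \<in> Rcar (Nset n r)" "x \<in> Qs r"
  then show "a * x \<in> Qs r" by (simp add: Qs_def Phi_mult Rcar_mult)
next
  fix a b :: "'k mpoly" assume "a \<in> Rcar (Nset n r)" "b \<in> Rcar (Nset n r)" "a * b \<in> Qs r"
  then show "a \<in> Qs r \<or> b \<in> Qs r" by (simp add: Qs_def Phi_mult)
qed

lemma Xv_Q: "a \<in> Nset n r \<Longrightarrow> (Xv a \<in> (Qs r :: 'k::field mpoly set)) \<longleftrightarrow> a \<notin> S"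
  by (simp add: Qs_def Phi_Xv Rcar_Xv)

lemma SP_Q: "S \<subseteq> Nset n r \<Longrightarrow> SP n r (Qs r :: 'k::field mpoly set) = S"
  unfolding SP_def using Xv_Q by blast

lemma I_Q:
  assumes sw: "switchable n r t S"
  shows "I_t n r t \<subseteq> (Qs r :: 'k::field mpoly set)"
  unfolding I_t_def
proof (rule gen_ideal_least[OF conjunct1[OF Q_prime[unfolded prime_ideal_def]]], rule subsetI)
  have SN: "S \<subseteq> Nset n r" using sw by (simp add: switchable_def)
  fix f :: "'k mpoly"
  assume "f \<in> {fpol i a b |i a b. a \<in> Nset n r \<and> b \<in> Nset n r \<and> dst n a b = 2 \<and> i \<in> {1..t}}"
  then obtain i a b where f: "f = fpol i a b" and aN: "a \<in> Nset n r" and bN: "b \<in> Nset n r"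
    and d: "dst n a b = 2" and i: "i \<in> {1..t}" by blast
  have fR: "f \<in> Rcar (Nset n r)" using f fpol_Rcar[OF aN bN] by simp
  let ?s = "a(i := b i)" and ?s' = "b(i := a i)"
  have sw1: "\<And>x y. x \<in> S \<Longrightarrow> y \<in> S \<Longrightarrow> dst n x y = 2 \<Longrightarrow> x(i := y i) \<in> S"
    using sw i unfolding switchable_def switch_single by blast
  have fe: "Phi f = Phi (Xv a * Xv b) - Phi (Xv ?s * Xv ?s')"
    by (simp add: f fpol_upd Phi_diff)
  show "f \<in> Qs r"
  proof (cases "a i = b i")
    case True
    then have "?s = a" "?s' = b" by auto
    then have "Phi f = 0" using fe by simp
    then show ?thesis using fR by (simp add: Qs_def)
  next
    case ne: False
    show ?thesis
    proof (cases "a \<in> S \<and> b \<in> S")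
      case True
      then have aS: "a \<in> S" and bS: "b \<in> S" by auto
      have sS: "?s \<in> S" using sw1[OF aS bS d] .
      have s'S: "?s' \<in> S" using sw1[OF bS aS] d dst_sym by metis
      have c1: "code ?s = code a" using code_eq[OF conn_adj[OF aS sS dst_upd_le1]] by simp
      have c2: "code ?s' = code b" using code_eq[OF conn_adj[OF bS s'S dst_upd_le1]] by simp
      have c3: "code ?s = code b" using code_eq[OF conn_adj[OF sS bS dst_upd_other[OF d ne aN bN]]] .
      have "EE (Poly_Mapping.single a 1 + Poly_Mapping.single b 1)
       = EE (Poly_Mapping.single ?s 1 + Poly_Mapping.single ?s' 1)"
        by (rule EE_swap[of _ "code a"]) (use c1 c2 c3 i in auto)
      then have "Phi f = 0" using fe by (simp add: Phi_XX aS bS sS s'S)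
      then show ?thesis using fR by (simp add: Qs_def)
    next
      case False
      have "\<not> (?s \<in> S \<and> ?s' \<in> S)"
      proof
        assume ss: "?s \<in> S \<and> ?s' \<in> S"
        have dd: "dst n ?s ?s' = 2" using d dst_swap by metis
        have "?s(i := ?s' i) \<in> S" using sw1 ss dd by blast
        moreover have "?s'(i := ?s i) \<in> S" using sw1 ss dd dst_sym by metis
        ultimately show False using False by simp
      qed
      then have "Phi f = 0" using fe False by (simp add: Phi_XX)
      then show ?thesis using fR by (simp add: Qs_def)
    qed
  qed
qed

end



definition XX :: "((nat \<Rightarrow> nat) \<Rightarrow>\<^sub>0 nat) \<Rightarrow> 'k::field mpoly" where
  "XX m = Poly_Mapping.single m 1"

lemma XX_add: "XX (m + m') = (XX m * XX m' :: 'k::field mpoly)"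
  by (simp add: XX_def mult_single)

lemma XX_single: "XX (Poly_Mapping.single a 1) = Xv a"
  by (simp add: XX_def Xv_def)

lemma XX_R: "Poly_Mapping.keys m \<subseteq> N \<Longrightarrow> XX m \<in> Rcar N"
  by (simp add: XX_def Rcar_single)

lemma split_key:
  assumes "b \<in> Poly_Mapping.keys (m :: 'a \<Rightarrow>\<^sub>0 nat)"
  shows "m = Poly_Mapping.single b 1 + (m - Poly_Mapping.single b 1)"
proof (rule poly_mapping_eqI)
  fix k
  have "poly_mapping.lookup m b \<ge> 1" using assms by (simp add: in_keys_iff)
  then show "poly_mapping.lookup m k = poly_mapping.lookup (Poly_Mapping.single b 1 + (m - Poly_Mapping.single b 1)) k"
    by (cases "k = b") (simp_all add: lookup_add lookup_minus lookup_single)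
qed

lemma keys_minus_single: "Poly_Mapping.keys ((m :: 'a \<Rightarrow>\<^sub>0 nat) - Poly_Mapping.single b 1) \<subseteq> Poly_Mapping.keys m"
  by (auto simp: in_keys_iff lookup_minus)

lemma keys_minus_single_other: "c \<in> Poly_Mapping.keys (m :: 'a \<Rightarrow>\<^sub>0 nat) \<Longrightarrow> c \<noteq> b \<Longrightarrow> c \<in> Poly_Mapping.keys (m - Poly_Mapping.single b 1)"
  by (simp add: in_keys_iff lookup_minus lookup_single)

definition sz :: "('a \<Rightarrow>\<^sub>0 nat) \<Rightarrow> nat" where
  "sz m = (\<Sum>a\<in>Poly_Mapping.keys m. poly_mapping.lookup m a)"

lemma sz_add: "sz ((m::'a \<Rightarrow>\<^sub>0 nat) + m') = sz m + sz m'"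
proof -
  let ?U = "Poly_Mapping.keys m \<union> Poly_Mapping.keys m'"
  have e: "\<And>p. Poly_Mapping.keys p \<subseteq> ?U \<Longrightarrow> sz p = (\<Sum>a\<in>?U. poly_mapping.lookup p a)"
    unfolding sz_def by (rule sum_keys_ext[where f = "\<lambda>a x. x"]) auto
  show ?thesis using e[of "m + m'"] e[of m] e[of m'] keys_add_nat[of m m']
    by (simp add: lookup_add sum.distrib)
qed

lemma sz_single: "sz (Poly_Mapping.single a (1::nat)) = 1"
  by (simp add: sz_def)

lemma single_one_inj: "Poly_Mapping.single x (1::'b::zero_neq_one) = Poly_Mapping.single y 1 \<Longrightarrow> x = y"
  by (metis lookup_single_eq lookup_single_not_eq zero_neq_one)

context tor begin

lemma deg_ge: "a \<in> Poly_Mapping.keys m \<Longrightarrow> cnt a v \<le> deg m v"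
proof -
  assume a: "a \<in> Poly_Mapping.keys m"
  have "cnt a v \<le> poly_mapping.lookup m a * cnt a v" using a by (simp add: in_keys_iff)
  also have "\<dots> \<le> deg m v" unfolding deg_def
    by (rule member_le_sum[OF a]) auto
  finally show ?thesis .
qed

lemma deg_pos: "deg m v \<noteq> 0 \<Longrightarrow> \<exists>c\<in>Poly_Mapping.keys m. cnt c v \<noteq> 0"
  unfolding deg_def by (metis (no_types, lifting) mult_zero_right sum.neutral)

lemma cnt_w: "cnt a (code a, tl' a, 0, 0) = 1"
  by (simp add: cnt_def')

lemma cnt_y: "j \<in> {1..t} \<Longrightarrow> cnt a (code a, [], j, a j) \<noteq> 0"
  by (simp add: cnt_def')

lemma cnt_w_inv: "cnt c (x, l, 0, 0) \<noteq> 0 \<Longrightarrow> code c = x \<and> tl' c = l"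
  by (simp add: cnt_def' split: if_splits)

lemma cnt_y_inv: "j \<in> {1..t} \<Longrightarrow> cnt c (x, [], j, y) \<noteq> 0 \<Longrightarrow> code c = x \<and> c j = y"
  by (auto simp add: cnt_def' split: if_splits)

context
  fixes r :: "nat \<Rightarrow> nat"
  assumes sw: "switchable n r t S"
begin

lemma SN: "S \<subseteq> Nset n r" using sw by (simp add: switchable_def)


lemma PS_gens: "{Xv a |a. a \<in> Nset n r \<and> a \<notin> S} \<union> {fpol i a b |i a b. i \<in> {1..t} \<and> connected_in n S a b}
   \<subseteq> (Rcar (Nset n r) :: 'k::field mpoly set)"
proof -
  have "connected_in n S a b \<Longrightarrow> a \<in> Nset n r \<and> b \<in> Nset n r" for a b
    using SN by (auto simp: connected_in_def)
  then show ?thesis by (auto intro: Rcar_Xv fpol_Rcar)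
qed

lemma PS_ideal: "is_ideal (Rcar (Nset n r)) (P_S n r t S :: 'k::field mpoly set)"
  unfolding P_S_def by (rule gen_ideal_is_ideal[OF PS_gens])

lemma PS_Q: "(P_S n r t S :: 'k::field mpoly set) \<subseteq> (Qs r :: 'k mpoly set)"
proof -
  have "P_S n r t (SP n r (Qs r :: 'k mpoly set)) \<subseteq> (Qs r :: 'k mpoly set)" by (rule P_S_SP_subset[OF Q_prime I_Q[OF sw]])
  moreover have "SP n r (Qs r :: 'k mpoly set) = S" by (rule SP_Q[OF SN])
  ultimately show ?thesis by simp
qed

lemma PS_fpol: "i \<in> {1..t} \<Longrightarrow> connected_in n S a b \<Longrightarrow> (fpol i a b :: 'k::field mpoly) \<in> P_S n r t S"
  unfolding P_S_def by (rule gen_ideal_gen) blast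

lemma PS_Xv: "a \<in> Nset n r \<Longrightarrow> a \<notin> S \<Longrightarrow> (Xv a :: 'k::field mpoly) \<in> P_S n r t S"
  unfolding P_S_def by (rule gen_ideal_gen) blast

lemma PS_add: "x \<in> P_S n r t S \<Longrightarrow> y \<in> P_S n r t S \<Longrightarrow> (x + y :: 'k::field mpoly) \<in> P_S n r t S"
  using PS_ideal[unfolded is_ideal_def] by blast

lemma PS_mult: "a \<in> Rcar (Nset n r) \<Longrightarrow> x \<in> P_S n r t S \<Longrightarrow> (a * x :: 'k::field mpoly) \<in> P_S n r t S"
  using PS_ideal[unfolded is_ideal_def] by blast

lemma PS_zero: "(0 :: 'k::field mpoly) \<in> P_S n r t S"
  using PS_ideal[unfolded is_ideal_def] by blast

lemma keysS_R: "Poly_Mapping.keys m \<subseteq> S \<Longrightarrow> XX m \<in> Rcar (Nset n r)"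
  using SN by (intro XX_R) blast

lemma move:
  assumes aS: "a \<in> S" and a0: "a \<in> Poly_Mapping.keys m0"
  shows "\<And>m b. Poly_Mapping.keys m \<subseteq> S \<Longrightarrow> EE m = EE m0 \<Longrightarrow> b \<in> Poly_Mapping.keys m \<Longrightarrow> code b = code a
    \<Longrightarrow> tl' b = tl' a \<Longrightarrow> card {j \<in> {1..t}. b j \<noteq> a j} = k
    \<Longrightarrow> \<exists>m2. Poly_Mapping.keys m2 \<subseteq> S \<and> EE m2 = EE m0 \<and> (XX m - XX m2 :: 'k::field mpoly) \<in> P_S n r t S
        \<and> a \<in> Poly_Mapping.keys m2"
proof (induction k)
  case 0
  have bS: "b \<in> S" using "0.prems" by blast
  have "{j \<in> {1..t}. b j \<noteq> a j} = {}" using "0.prems"(6) by simp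
  then have e1: "\<And>j. j \<in> {1..t} \<Longrightarrow> b j = a j" by blast
  have "\<forall>k\<in>set [Suc t..<Suc n]. b k = a k" using "0.prems"(5) unfolding tl'_def by (simp only: map_eq_conv)
  then have e2: "\<And>k. k \<in> {Suc t..n} \<Longrightarrow> b k = a k" by auto
  have "b = a"
  proof (rule Nset_eqI)
    show "b \<in> Nset n r" "a \<in> Nset n r" using bS aS SN by auto
    fix k assume "k \<in> {1..n}"
    then show "b k = a k" using e1 e2 by (cases "k \<le> t") auto
  qed
  then show ?case using "0.prems" PS_zero by (intro exI[of _ m]) auto
next
  case (Suc k)
  note pr = Suc.prems
  have bS: "b \<in> S" using pr by blast
  have "{j \<in> {1..t}. b j \<noteq> a j} \<noteq> {}" using pr(6) by (metis card.empty Zero_not_Suc)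
  then obtain j where j: "j \<in> {1..t}" and bj: "b j \<noteq> a j" by blast
  have "deg m0 (code a, [], j, a j) \<noteq> 0" using deg_ge[OF a0, of "(code a, [], j, a j)"] cnt_y[OF j, of a] by linarith
  then have "deg m (code a, [], j, a j) \<noteq> 0" using pr(2) by (metis lookup_EE)
  then obtain c where cm: "c \<in> Poly_Mapping.keys m" and "cnt c (code a, [], j, a j) \<noteq> 0" using deg_pos by blast
  then have cc: "code c = code a" and cj: "c j = a j" using cnt_y_inv[OF j] by blast+
  have cS: "c \<in> S" using cm pr(1) by blast
  have bc: "b \<noteq> c" using cj bj by blast
  have conn: "connected_in n S b c" using code_conn[OF SN bS cS] cc pr(4) by simp
  let ?b' = "b(j := c j)" and ?c' = "c(j := b j)"
  have fP: "(fpol j b c :: 'k mpoly) \<in> P_S n r t S" by (rule PS_fpol[OF j conn])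
  then have "Phi (fpol j b c :: 'k mpoly) = 0" using PS_Q by (auto simp: Qs_def)
  then have "Phi (Xv b * Xv c :: 'k mpoly) = Phi (Xv ?b' * Xv ?c')"
    by (simp add: fpol_upd Phi_diff)
  then have eq: "Poly_Mapping.single (EE (Poly_Mapping.single b 1 + Poly_Mapping.single c 1)) (1::'k) =
    (if ?b' \<in> S \<and> ?c' \<in> S then Poly_Mapping.single (EE (Poly_Mapping.single ?b' 1 + Poly_Mapping.single ?c' 1)) 1 else 0)"
    by (simp only: Phi_XX) (simp add: bS cS)
  then have b'S: "?b' \<in> S" and c'S: "?c' \<in> S"
    by (metis single_one_ne)+
  with eq have EEbc: "EE (Poly_Mapping.single ?b' 1 + Poly_Mapping.single ?c' 1) = EE (Poly_Mapping.single b 1 + Poly_Mapping.single c 1)"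
    using single_one_inj by (metis (no_types, lifting))
  define mr where "mr = m - Poly_Mapping.single b 1 - Poly_Mapping.single c 1"
  have cm': "c \<in> Poly_Mapping.keys (m - Poly_Mapping.single b 1)" using keys_minus_single_other[OF cm] bc by metis
  have mdec: "m = Poly_Mapping.single b 1 + Poly_Mapping.single c 1 + mr"
    using split_key[OF pr(3)] split_key[OF cm'] unfolding mr_def by (metis add.assoc)
  have mrS: "Poly_Mapping.keys mr \<subseteq> S"
    using pr(1) mdec keys_add_nat by (metis le_sup_iff)
  define mn where "mn = Poly_Mapping.single ?b' 1 + Poly_Mapping.single ?c' 1 + mr"
  have mnS: "Poly_Mapping.keys mn \<subseteq> S" unfolding mn_def keys_add_nat using b'S c'S mrS by auto
  have EEmn: "EE mn = EE m0" using pr(2) EEbc by (simp add: mn_def mdec EE_add)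
  have b'mn: "?b' \<in> Poly_Mapping.keys mn" unfolding mn_def keys_add_nat by simp
  have cb': "code ?b' = code a" using code_eq[OF conn_adj[OF bS b'S dst_upd_le1]] pr(4) by simp
  have tb': "tl' ?b' = tl' a" using tl_upd[OF j] pr(5) by simp
  have "{j' \<in> {1..t}. ?b' j' \<noteq> a j'} = {j' \<in> {1..t}. b j' \<noteq> a j'} - {j}" using cj by auto
  then have cardb': "card {j' \<in> {1..t}. ?b' j' \<noteq> a j'} = k" using pr(6) j bj by (simp add: card_Diff_singleton)
  obtain m2 where m2: "Poly_Mapping.keys m2 \<subseteq> S" "EE m2 = EE m0" "(XX mn - XX m2 :: 'k mpoly) \<in> P_S n r t S"
    "a \<in> Poly_Mapping.keys m2"
    using Suc.IH[OF mnS EEmn b'mn cb' tb' cardb'] by blast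
  have "(XX m - XX mn :: 'k mpoly) = XX mr * fpol j b c"
    unfolding mdec mn_def XX_add XX_single fpol_upd by (simp add: algebra_simps)
  also have "\<dots> \<in> P_S n r t S" by (rule PS_mult[OF keysS_R[OF mrS] fP])
  finally have "(XX m - XX mn :: 'k mpoly) \<in> P_S n r t S" .
  then have "(XX m - XX mn) + (XX mn - XX m2) \<in> (P_S n r t S :: 'k mpoly set)" using m2(3) by (rule PS_add)
  then show ?case using m2 by (intro exI[of _ m2]) simp
qed


lemma FC:
  "sz m' = N \<Longrightarrow> Poly_Mapping.keys m \<subseteq> S \<Longrightarrow> Poly_Mapping.keys m' \<subseteq> S \<Longrightarrow> EE m = EE m'
    \<Longrightarrow> (XX m - XX m' :: 'k::field mpoly) \<in> P_S n r t S"
proof (induction N arbitrary: m m' rule: less_induct)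
  case (less N)
  show ?case
  proof (cases "m' = 0")
    case True
    have "m = 0"
    proof (rule ccontr)
      assume "m \<noteq> 0"
      then obtain b where b: "b \<in> Poly_Mapping.keys m" using keys_eq_empty by blast
      have "cnt b (code b, tl' b, 0, 0) \<le> deg m (code b, tl' b, 0, 0)" by (rule deg_ge[OF b])
      moreover have "deg m (code b, tl' b, 0, 0) = 0"
        using less.prems(4) True by (metis lookup_EE EE_zero lookup_zero)
      ultimately show False using cnt_w[of b] by simp
    qed
    then show ?thesis using True PS_zero by simp
  next
    case False
    then obtain a where a: "a \<in> Poly_Mapping.keys m'" using keys_eq_empty by blast
    have aS: "a \<in> S" using a less.prems(3) by blast
    have "deg m' (code a, tl' a, 0, 0) \<noteq> 0" using deg_ge[OF a, of "(code a, tl' a, 0, 0)"] cnt_w[of a] by linarith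
    then have "deg m (code a, tl' a, 0, 0) \<noteq> 0" using less.prems(4) by (metis lookup_EE)
    then obtain b where b: "b \<in> Poly_Mapping.keys m" and "cnt b (code a, tl' a, 0, 0) \<noteq> 0" using deg_pos by blast
    then have cb: "code b = code a" and tb: "tl' b = tl' a" using cnt_w_inv by blast+
    obtain m2 where m2: "Poly_Mapping.keys m2 \<subseteq> S" "EE m2 = EE m'" "(XX m - XX m2 :: 'k mpoly) \<in> P_S n r t S"
      "a \<in> Poly_Mapping.keys m2"
      using move[OF aS a less.prems(2) less.prems(4) b cb tb refl] by blast
    define m2r where "m2r = m2 - Poly_Mapping.single a 1"
    define m'r where "m'r = m' - Poly_Mapping.single a 1"
    have d2: "m2 = Poly_Mapping.single a 1 + m2r" unfolding m2r_def by (rule split_key[OF m2(4)])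
    have d': "m' = Poly_Mapping.single a 1 + m'r" unfolding m'r_def by (rule split_key[OF a])
    have "EE (Poly_Mapping.single a 1) + EE m2r = EE (Poly_Mapping.single a 1) + EE m'r"
      using m2(2) d2 d' by (metis EE_add)
    then have EEr: "EE m2r = EE m'r" by simp
    have "sz m' = sz (Poly_Mapping.single a (1::nat)) + sz m'r"
      using sz_add[of "Poly_Mapping.single a 1" m'r] d' by (simp only:)
    then have szr: "sz m'r < N" using less.prems(1) sz_single[of a] by linarith
    have k2: "Poly_Mapping.keys m2r \<subseteq> S" unfolding m2r_def by (rule order_trans[OF keys_minus_single m2(1)])
    have k': "Poly_Mapping.keys m'r \<subseteq> S" unfolding m'r_def by (rule order_trans[OF keys_minus_single less.prems(3)])
    have IH: "(XX m2r - XX m'r :: 'k mpoly) \<in> P_S n r t S" by (rule less.IH[OF szr refl k2 k' EEr])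
    have aN: "a \<in> Nset n r" using aS SN by blast
    have "(XX m - XX m' :: 'k mpoly) = (XX m - XX m2) + Xv a * (XX m2r - XX m'r)"
      unfolding d2 d' XX_add XX_single by (simp add: algebra_simps)
    also have "\<dots> \<in> P_S n r t S"
      by (rule PS_add[OF m2(3) PS_mult[OF Rcar_Xv[OF aN] IH]])
    finally show ?thesis .
  qed
qed

lemma single_sum: "finite F \<Longrightarrow> Poly_Mapping.single k (sum f F) = (\<Sum>x\<in>F. Poly_Mapping.single k (f x))"
  by (induction F rule: finite_induct) (simp_all add: single_add)

lemma Q_sub: "(Qs r :: 'k::field mpoly set) \<subseteq> P_S n r t S"
proof
  fix p :: "'k mpoly" assume "p \<in> Qs r"
  then have pR: "p \<in> Rcar (Nset n r)" and Ph: "Phi p = 0" by (auto simp: Qs_def)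
  define K where "K = Poly_Mapping.keys p"
  define K1 where "K1 = {m \<in> K. Poly_Mapping.keys m \<subseteq> S}"
  define K2 where "K2 = {m \<in> K. \<not> Poly_Mapping.keys m \<subseteq> S}"
  have finK: "finite K" by (simp add: K_def)
  have fin1: "finite K1" and fin2: "finite K2" using finK by (auto simp: K1_def K2_def)
  define c where "c m = poly_mapping.lookup p m" for m
  have sc: "\<And>m. Poly_Mapping.single m (c m) = Poly_Mapping.single 0 (c m) * (XX m :: 'k mpoly)"
    by (simp add: XX_def mult_single)
  have C0: "\<And>m. Poly_Mapping.single 0 (c m) \<in> (Rcar (Nset n r) :: 'k mpoly set)"
    by (rule Rcar_single) simp
  have KN: "\<And>m. m \<in> K \<Longrightarrow> Poly_Mapping.keys m \<subseteq> Nset n r" using pR by (auto simp: K_def Rcar_def)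
  have pe: "p = (\<Sum>m\<in>K1. Poly_Mapping.single m (c m)) + (\<Sum>m\<in>K2. Poly_Mapping.single m (c m))"
  proof -
    have "K = K1 \<union> K2" "K1 \<inter> K2 = {}" by (auto simp: K1_def K2_def)
    then have "(\<Sum>m\<in>K. Poly_Mapping.single m (c m)) = (\<Sum>m\<in>K1. Poly_Mapping.single m (c m)) + (\<Sum>m\<in>K2. Poly_Mapping.single m (c m))"
      using fin1 fin2 by (simp add: sum.union_disjoint)
    then show ?thesis using poly_expand[of p] by (simp add: K_def c_def)
  qed
  have part2: "(\<Sum>m\<in>K2. Poly_Mapping.single m (c m)) \<in> P_S n r t S"
  proof (rule ideal_sum[OF fin2 PS_ideal])
    fix m assume m: "m \<in> K2"
    then obtain a where a: "a \<in> Poly_Mapping.keys m" "a \<notin> S" by (auto simp: K2_def)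
    have mN: "Poly_Mapping.keys m \<subseteq> Nset n r" using m KN by (auto simp: K2_def)
    have aN: "a \<in> Nset n r" using a mN by blast
    define mr where "mr = m - Poly_Mapping.single a 1"
    have dm: "m = Poly_Mapping.single a 1 + mr" unfolding mr_def by (rule split_key[OF a(1)])
    have mrN: "Poly_Mapping.keys mr \<subseteq> Nset n r" unfolding mr_def by (rule order_trans[OF keys_minus_single mN])
    have "(XX m :: 'k mpoly) = XX mr * Xv a" unfolding dm XX_add XX_single by (simp add: mult.commute)
    also have "\<dots> \<in> P_S n r t S" by (rule PS_mult[OF XX_R[OF mrN] PS_Xv[OF aN a(2)]])
    finally have "(XX m :: 'k mpoly) \<in> P_S n r t S" .
    then show "Poly_Mapping.single m (c m) \<in> P_S n r t S" unfolding sc by (rule PS_mult[OF C0])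
  qed
  define rep where "rep e = (SOME m. m \<in> K1 \<and> EE m = e)" for e
  have repP: "\<And>m. m \<in> K1 \<Longrightarrow> rep (EE m) \<in> K1 \<and> EE (rep (EE m)) = EE m"
    unfolding rep_def by (rule someI) blast
  have fib: "(\<Sum>m\<in>{m \<in> K1. EE m = e}. c m) = 0" for e
  proof -
    have "poly_mapping.lookup (Phi p) e = (\<Sum>m\<in>K. poly_mapping.lookup (gg m (c m)) e)"
      by (simp add: Phi_def lookup_sum K_def c_def)
    also have "\<dots> = (\<Sum>m\<in>K. if Poly_Mapping.keys m \<subseteq> S \<and> EE m = e then c m else 0)"
      by (rule sum.cong) (auto simp: gg_def lookup_single when_def)
    also have "\<dots> = (\<Sum>m\<in>{m \<in> K. Poly_Mapping.keys m \<subseteq> S \<and> EE m = e}. c m)"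
      using finK by (simp add: sum.inter_filter)
    also have "{m \<in> K. Poly_Mapping.keys m \<subseteq> S \<and> EE m = e} = {m \<in> K1. EE m = e}" by (auto simp: K1_def)
    finally show ?thesis using Ph by simp
  qed
  have split1: "(\<Sum>m\<in>K1. Poly_Mapping.single m (c m)) =
     (\<Sum>m\<in>K1. Poly_Mapping.single 0 (c m) * (XX m - XX (rep (EE m)))) +
     (\<Sum>m\<in>K1. Poly_Mapping.single 0 (c m) * (XX (rep (EE m)) :: 'k mpoly))"
    by (simp add: sc sum.distrib[symmetric] algebra_simps)
  have part1a: "(\<Sum>m\<in>K1. Poly_Mapping.single 0 (c m) * (XX m - XX (rep (EE m)) :: 'k mpoly)) \<in> P_S n r t S"
  proof (rule ideal_sum[OF fin1 PS_ideal])
    fix m assume m: "m \<in> K1"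
    have mS: "Poly_Mapping.keys m \<subseteq> S" using m by (simp add: K1_def)
    have rS: "Poly_Mapping.keys (rep (EE m)) \<subseteq> S" using repP[OF m] by (simp add: K1_def)
    have "(XX m - XX (rep (EE m)) :: 'k mpoly) \<in> P_S n r t S"
      by (rule FC[OF refl mS rS]) (use repP[OF m] in simp)
    then show "Poly_Mapping.single 0 (c m) * (XX m - XX (rep (EE m))) \<in> P_S n r t S"
      by (rule PS_mult[OF C0])
  qed
  have part1b: "(\<Sum>m\<in>K1. Poly_Mapping.single 0 (c m) * (XX (rep (EE m)) :: 'k mpoly)) = 0"
  proof -
    have "(\<Sum>m\<in>K1. Poly_Mapping.single 0 (c m) * (XX (rep (EE m)) :: 'k mpoly))
      = (\<Sum>e\<in>EE ` K1. \<Sum>m\<in>{m \<in> K1. EE m = e}. Poly_Mapping.single 0 (c m) * (XX (rep (EE m)) :: 'k mpoly))"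
      by (rule sum.image_gen[OF fin1])
    also have "\<dots> = (\<Sum>e\<in>EE ` K1. Poly_Mapping.single 0 (\<Sum>m\<in>{m \<in> K1. EE m = e}. c m) * (XX (rep e) :: 'k mpoly))"
    proof (rule sum.cong[OF refl])
      fix e
      have fe: "finite {m \<in> K1. EE m = e}" using fin1 by simp
      have "(\<Sum>m\<in>{m \<in> K1. EE m = e}. Poly_Mapping.single 0 (c m) * (XX (rep (EE m)) :: 'k mpoly))
        = (\<Sum>m\<in>{m \<in> K1. EE m = e}. Poly_Mapping.single 0 (c m) * (XX (rep e) :: 'k mpoly))"
        by (rule sum.cong) auto
      also have "\<dots> = (\<Sum>m\<in>{m \<in> K1. EE m = e}. Poly_Mapping.single 0 (c m)) * XX (rep e)"
        by (simp add: sum_distrib_right)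
      also have "\<dots> = Poly_Mapping.single 0 (\<Sum>m\<in>{m \<in> K1. EE m = e}. c m) * XX (rep e)"
        by (simp only: single_sum[OF fe, of 0 c])
      finally show "(\<Sum>m\<in>{m \<in> K1. EE m = e}. Poly_Mapping.single 0 (c m) * (XX (rep (EE m)) :: 'k mpoly))
        = Poly_Mapping.single 0 (\<Sum>m\<in>{m \<in> K1. EE m = e}. c m) * XX (rep e)" .
    qed
    also have "\<dots> = 0" by (simp add: fib)
    finally show ?thesis .
  qed
  have "p = (\<Sum>m\<in>K1. Poly_Mapping.single 0 (c m) * (XX m - XX (rep (EE m)) :: 'k mpoly))
     + (\<Sum>m\<in>K2. Poly_Mapping.single m (c m))"
    using pe split1 part1b by simp
  then show "p \<in> P_S n r t S" using PS_add[OF part1a part2] by simp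
qed

lemma PS_eq_Q: "(P_S n r t S :: 'k::field mpoly set) = Qs r"
  using PS_Q Q_sub by blast

end

end



lemma PS_prime: "switchable n r t S \<Longrightarrow> prime_ideal (Rcar (Nset n r)) (P_S n r t S :: 'k::field mpoly set)"
  using tor.PS_eq_Q[where 'k="'k" and n=n and t=t and S=S and r=r] tor.Q_prime[where 'k="'k" and n=n and t=t and S=S and r=r] by simp

lemma PS_I: "switchable n r t S \<Longrightarrow> I_t n r t \<subseteq> (P_S n r t S :: 'k::field mpoly set)"
  using tor.PS_eq_Q[where 'k="'k" and n=n and t=t and S=S and r=r] tor.I_Q[where 'k="'k" and n=n and t=t and S=S and r=r] by simp

lemma PS_Xv_iff: "switchable n r t S \<Longrightarrow> a \<in> Nset n r \<Longrightarrow> (Xv a \<in> (P_S n r t S :: 'k::field mpoly set)) \<longleftrightarrow> a \<notin> S"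
  using tor.PS_eq_Q[where 'k="'k" and n=n and t=t and S=S and r=r] tor.Xv_Q[where 'k="'k" and n=n and t=t and S=S and r=r and a=a] by simp

theorem theorem4p13:
  fixes n t :: nat and r :: "nat \<Rightarrow> nat"
  assumes "\<forall>i\<in>{1..n}. r i > 0"
    and "t \<in> {1..n}"
  shows "{P :: 'k::field mpoly set. minimal_prime_over (Rcar (Nset n r)) (I_t n r t) P}
       = {P_S n r t S | S. maximal_switchable TYPE('k) n r t S}"
proof (rule set_eqI, rule iffI)
  fix P :: "'k mpoly set"
  assume "P \<in> {P :: 'k::field mpoly set. minimal_prime_over (Rcar (Nset n r)) (I_t n r t) P}"
  then have pr: "prime_ideal (Rcar (Nset n r)) P" and IP: "I_t n r t \<subseteq> P"
    and mn: "\<And>Q. prime_ideal (Rcar (Nset n r)) Q \<Longrightarrow> I_t n r t \<subseteq> Q \<Longrightarrow> Q \<subseteq> P \<Longrightarrow> Q = P"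
    unfolding minimal_prime_over_def by blast+
  define S where "S = SP n r P"
  have sw: "switchable n r t S" unfolding S_def by (rule SP_switchable[OF pr IP])
  have sub: "P_S n r t S \<subseteq> P" unfolding S_def by (rule P_S_SP_subset[OF pr IP])
  have eq: "P_S n r t S = P" by (rule mn[OF PS_prime[OF sw] PS_I[OF sw] sub])
  have SN: "S \<subseteq> Nset n r" using sw by (simp add: switchable_def)
  have "maximal_switchable TYPE('k) n r t S"
    unfolding maximal_switchable_def
  proof (intro conjI allI impI)
    show "switchable n r t S" by (rule sw)
  next
    fix T assume TT: "switchable n r t T \<and> S \<subset> T"
    then have swT: "switchable n r t T" and ST: "S \<subset> T" by auto
    obtain a where aT: "a \<in> T" and aS: "a \<notin> S" using ST by blast
    have aN: "a \<in> Nset n r" using swT aT by (auto simp: switchable_def)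
    have inS: "Xv a \<in> (P_S n r t S :: 'k mpoly set)" using PS_Xv_iff[OF sw aN] aS by simp
    have ninT: "Xv a \<notin> (P_S n r t T :: 'k mpoly set)" using PS_Xv_iff[OF swT aN] aT by simp
    show "\<not> (P_S n r t S :: 'k mpoly set) \<subseteq> P_S n r t T" using inS ninT by blast
    show "\<not> (P_S n r t T :: 'k mpoly set) \<subseteq> P_S n r t S"
    proof
      assume h: "(P_S n r t T :: 'k mpoly set) \<subseteq> P_S n r t S"
      have "(P_S n r t T :: 'k mpoly set) = P" using mn[OF PS_prime[OF swT] PS_I[OF swT]] h eq by simp
      then show False using inS ninT eq by simp
    qed
  qed
  then show "P \<in> {P_S n r t S | S. maximal_switchable TYPE('k) n r t S}" using eq by blast
next
  fix P :: "'k mpoly set"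
  assume "P \<in> {P_S n r t S | S. maximal_switchable TYPE('k) n r t S}"
  then obtain S where P: "P = P_S n r t S" and ms: "maximal_switchable TYPE('k) n r t S" by blast
  have sw: "switchable n r t S" using ms by (simp add: maximal_switchable_def)
  have SN: "S \<subseteq> Nset n r" using sw by (simp add: switchable_def)
  have "minimal_prime_over (Rcar (Nset n r)) (I_t n r t) (P_S n r t S :: 'k mpoly set)"
    unfolding minimal_prime_over_def
  proof (intro conjI allI impI)
    show "prime_ideal (Rcar (Nset n r)) (P_S n r t S :: 'k mpoly set)" by (rule PS_prime[OF sw])
    show "I_t n r t \<subseteq> (P_S n r t S :: 'k mpoly set)" by (rule PS_I[OF sw])
  next
    fix Q :: "'k mpoly set"
    assume "prime_ideal (Rcar (Nset n r)) Q \<and> I_t n r t \<subseteq> Q \<and> Q \<subseteq> P_S n r t S"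
    then have prQ: "prime_ideal (Rcar (Nset n r)) Q" and IQ: "I_t n r t \<subseteq> Q" and QS: "Q \<subseteq> P_S n r t S"
      by auto
    define T where "T = SP n r Q"
    have swT: "switchable n r t T" unfolding T_def by (rule SP_switchable[OF prQ IQ])
    have subT: "P_S n r t T \<subseteq> Q" unfolding T_def by (rule P_S_SP_subset[OF prQ IQ])
    have ST: "S \<subseteq> T"
    proof
      fix a assume aS: "a \<in> S"
      then have aN: "a \<in> Nset n r" using SN by blast
      have "Xv a \<notin> (P_S n r t S :: 'k mpoly set)" using PS_Xv_iff[OF sw aN] aS by simp
      then have "Xv a \<notin> Q" using QS by blast
      then show "a \<in> T" using aN by (simp add: T_def SP_def)
    qed
    show "Q = P_S n r t S"
    proof (cases "S = T")
      case True
      then show ?thesis using subT QS by blast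
    next
      case False
      then have "S \<subset> T" using ST by blast
      then have "\<not> (P_S n r t T :: 'k mpoly set) \<subseteq> P_S n r t S"
        using ms swT unfolding maximal_switchable_def by blast
      then show ?thesis using subT QS by blast
    qed
  qed
  then show "P \<in> {P :: 'k::field mpoly set. minimal_prime_over (Rcar (Nset n r)) (I_t n r t) P}"
    using P by simp
qed


end
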